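(* Let $G$ be a connected bipartite graph with color classes $E$ and $V$, $\Gamma$ a spanning tree of $G$ inducing the hypertree $\mathbf f$ of $(V,E)$, and $\mathbf f^+=\mathbf f+\frac1{|E|}\mathbf i_E\in\mathbf R^E$. For each $v\in V$ and each edge $\varepsilon$ of $\Gamma$ adjacent to $v$, let $E_{v,\varepsilon}$ be the set of elements of $E$ whose path in $\Gamma$ from $v$ starts with $\varepsilon$, and set $w(\varepsilon)=|E_{v,\varepsilon}|/|E|$ (each edge has a unique endpoint in $V$, so $w$ is well defined on edges of $\Gamma$). Then for each $v$ the weights $w(\varepsilon)$ over edges $\varepsilon$ of $\Gamma$ at $v$ are non-negative and sum to $1$, so $\sum_{v\in V}\sum_{\varepsilon\ni v}w(\varepsilon)\,\mathbf i_{\{e_\varepsilon\}}$ is a point of the Minkowski cell $M_\Gamma$, and this point equals $\mathbf f^+$; that is, these weights are the barycentric coordinates (in the direct sum decomposition of $M_\Gamma$) of $\mathbf f^+$.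
   Context: A hypertree induced by a spanning tree $\Gamma$ is the function $\mathbf f\colon E\to\mathbf N$ with $\mathbf f(e)+1$ equal to the degree of $e$ in $\Gamma$. $\mathbf i_S$ is the indicator vector of $S$. For $v\in V$, $\Delta^\Gamma_v=\operatorname{conv}\{\mathbf i_{\{e\}}\mid ev\text{ an edge of }\Gamma\}\subset\mathbf R^E$, and $M_\Gamma=\sum_{v\in V}\Delta^\Gamma_v$ (Minkowski sum), which is a direct sum: each point has a unique representation as a sum of one point from each $\Delta^\Gamma_v$. A point of $\Delta^\Gamma_v$ is described by barycentric weights on the edges of $\Gamma$ at $v$; $e_\varepsilon\in E$ denotes the endpoint of $\varepsilon$ in $E$. *)

theory Defs
  imports "HOL-Analysis.Analysis"
begin

text \<open>A bipartite graph with colour classes E and V is modelled by two finite types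
 'e (the class E) and 'v (the class V); its edge set is a set of pairs (e,v).\<close>

definition badj :: "('e \<times> 'v) set \<Rightarrow> ('e + 'v) \<Rightarrow> ('e + 'v) \<Rightarrow> bool" where
  "badj G x y \<longleftrightarrow> (\<exists>e v. (e, v) \<in> G \<and>
      ((x = Inl e \<and> y = Inr v) \<or> (x = Inr v \<and> y = Inl e)))"

definition bpath :: "('e \<times> 'v) set \<Rightarrow> ('e + 'v) list \<Rightarrow> bool" where
  "bpath G xs \<longleftrightarrow> xs \<noteq> [] \<and> distinct xs \<and>
      (\<forall>i. Suc i < length xs \<longrightarrow> badj G (xs ! i) (xs ! Suc i))"

definition bconnected :: "('e \<times> 'v) set \<Rightarrow> bool" where
  "bconnected G \<longleftrightarrow> (\<forall>x y. \<exists>xs. bpath G xs \<and> hd xs = x \<and> last xs = y)"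

definition bhas_cycle :: "('e \<times> 'v) set \<Rightarrow> bool" where
  "bhas_cycle G \<longleftrightarrow> (\<exists>xs. 3 \<le> length xs \<and> bpath G xs \<and> badj G (last xs) (hd xs))"

text \<open>Spanning tree of G (vertex set is all of 'e + 'v): connected acyclic subgraph.\<close>
definition spanning_tree :: "('e \<times> 'v) set \<Rightarrow> ('e \<times> 'v) set \<Rightarrow> bool" where
  "spanning_tree G T \<longleftrightarrow> T \<subseteq> G \<and> bconnected T \<and> \<not> bhas_cycle T"

definition hypertree_of :: "('e \<times> 'v) set \<Rightarrow> 'e \<Rightarrow> nat" where
  "hypertree_of T e = card {v. (e, v) \<in> T} - 1"

definition branch :: "('e \<times> 'v) set \<Rightarrow> 'v \<Rightarrow> ('e \<times> 'v) \<Rightarrow> 'e set" where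
  "branch T v \<epsilon> = {e. \<exists>xs. bpath T xs \<and> hd xs = Inr v \<and> last xs = Inl e \<and>
      2 \<le> length xs \<and> xs ! 1 = Inl (fst \<epsilon>)}"

definition weight :: "('e::finite \<times> 'v) set \<Rightarrow> ('e \<times> 'v) \<Rightarrow> real" where
  "weight T \<epsilon> = real (card (branch T (snd \<epsilon>) \<epsilon>)) / real CARD('e)"

text \<open>R^E is real ^ 'e; the indicator vector i_{e} is axis e 1.
 Delta^T_v = conv { i_{e} | ev edge of T }.\<close>
definition Delta :: "('e::finite \<times> 'v) set \<Rightarrow> 'v \<Rightarrow> (real ^ 'e) set" where
  "Delta T v = convex hull {axis e 1 | e. (e, v) \<in> T}"

definition Mcell :: "('e::finite \<times> 'v::finite) set \<Rightarrow> (real ^ 'e) set" where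
  "Mcell T = {(\<Sum>v\<in>UNIV. p v) | p. \<forall>v. p v \<in> Delta T v}"

end

theory Submission imports Defs begin

lemma bpath_alt: "bpath G xs \<longleftrightarrow> xs \<noteq> [] \<and> distinct xs \<and> successively (badj G) xs"
  unfolding bpath_def successively_conv_nth by blast

lemma badj_sym: "badj G x y = badj G y x"
  unfolding badj_def by blast

lemma badj_simps[simp]:
  "badj G (Inl e) (Inr v) \<longleftrightarrow> (e,v) \<in> G"
  "badj G (Inr v) (Inl e) \<longleftrightarrow> (e,v) \<in> G"
  "\<not> badj G (Inl e) (Inl e')"
  "\<not> badj G (Inr v) (Inr v')"
  unfolding badj_def by auto

lemma badj_Inr_cases: "badj G (Inr v) x \<Longrightarrow> \<exists>e. x = Inl e \<and> (e,v) \<in> G"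
  by (cases x) auto
lemma badj_Inl_cases: "badj G (Inl e) x \<Longrightarrow> \<exists>v. x = Inr v \<and> (e,v) \<in> G"
  by (cases x) auto

lemma succ_rev_sym: "successively (badj G) xs \<Longrightarrow> successively (badj G) (rev xs)"
  by (simp add: badj_sym[of G])

lemma path_unique:
  assumes nc: "\<not> bhas_cycle T"
  shows "bpath T xs \<Longrightarrow> bpath T ys \<Longrightarrow> hd xs = hd ys \<Longrightarrow> last xs = last ys \<Longrightarrow> xs = ys"
proof (induction xs arbitrary: ys)
  case Nil
  then show ?case by (simp add: bpath_def)
next
  case (Cons a xs')
  from Cons.prems obtain ys' where ys: "ys = a # ys'" 
    by (cases ys) (auto simp: bpath_def)
  show ?case
  proof (cases "xs' = []")
    case True
    then have "last ys = a" using Cons.prems by simp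
    then show ?thesis using Cons.prems True ys
      by (cases "ys' = []") (auto simp: bpath_def)
  next
    case xne: False
    show ?thesis
    proof (cases "ys' = []")
      case True
      then have "last xs' = a" using Cons.prems ys xne by simp
      then have "a \<in> set xs'" using xne last_in_set by metis
      then show ?thesis using Cons.prems by (auto simp: bpath_def)
    next
      case yne: False
      have px: "bpath T xs'" "bpath T ys'"
        using Cons.prems xne yne ys by (auto simp: bpath_alt successively_Cons)
      have lx: "last xs' = last ys'" using Cons.prems xne yne ys by simp
      show ?thesis
      proof (cases "hd xs' = hd ys'")
        case True
        then show ?thesis using Cons.IH[OF px(1) px(2) True lx] ys by simp
      next
        case hne: False
        have "\<exists>x\<in>set xs'. x \<in> set ys'" using lx xne yne by (metis last_in_set)
        from split_list_first_prop[OF this] obtain us z r1 where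
          xs': "xs' = us @ z # r1" and zin: "z \<in> set ys'" and us: "\<forall>y\<in>set us. y \<notin> set ys'"
          by blast
        from zin obtain ps qs where ys': "ys' = ps @ z # qs" by (meson split_list)
        define c where "c = a # us @ z # rev ps"
        have dx: "distinct (a # us @ z # r1)" and dy: "distinct (a # ps @ z # qs)"
          using Cons.prems xs' ys ys' by (auto simp: bpath_def)
        have sx: "successively (badj T) (a # us @ z # r1)" and sy: "successively (badj T) (a # ps @ z # qs)"
          using Cons.prems xs' ys ys' by (auto simp: bpath_alt)
        have "successively (badj T) (a # us @ [z])"
          using sx successively_append_iff[of "badj T" "a # us @ [z]" r1] by simp
        moreover have "successively (badj T) (z # rev ps)"
        proof -
          have "successively (badj T) (ps @ [z])"
            using sy successively_append_iff[of "badj T" "a # ps @ [z]" qs]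
              successively_append_iff[of "badj T" "[a]" "ps @ [z]"] by (simp add: successively_Cons)
          from succ_rev_sym[OF this] show ?thesis by simp
        qed
        ultimately have sc: "successively (badj T) c"
        proof -
          assume s1: "successively (badj T) (a # us @ [z])" and s2: "successively (badj T) (z # rev ps)"
          have e: "c = (a # us @ [z]) @ rev ps" unfolding c_def by simp
          have "successively (badj T) (rev ps)" "rev ps = [] \<or> badj T z (hd (rev ps))"
            using s2 unfolding successively_Cons by auto
          then show ?thesis unfolding e successively_append_iff using s1 by auto
        qed
        have dc: "distinct c" unfolding c_def using dx dy us ys' by auto
        have lenc: "3 \<le> length c"
        proof (cases "ps = []")
          case True
          then have "us \<noteq> []" using hne xs' ys' by auto
          then show ?thesis unfolding c_def by (cases us) simp_all
        next
          case False then show ?thesis unfolding c_def by (cases ps) simp_all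
        qed
        have adj: "badj T (last c) (hd c)"
        proof (cases "ps = []")
          case True
          then have "badj T a z" using sy by simp
          then show ?thesis unfolding c_def using True by (simp add: badj_sym)
        next
          case False
          then obtain p ps' where "ps = p # ps'" by (cases ps) auto
          then have "badj T a p" using sy by simp
          then show ?thesis unfolding c_def using \<open>ps = p # ps'\<close> by (simp add: badj_sym)
        qed
        have "bhas_cycle T" unfolding bhas_cycle_def bpath_alt
          using sc dc lenc adj by (intro exI[of _ c]) (auto simp: c_def)
        then show ?thesis using nc by simp
      qed
    qed
  qed
qed

lemma len2: "bpath T xs \<Longrightarrow> hd xs \<noteq> last xs \<Longrightarrow> 2 \<le> length xs"
  by (cases xs; cases "tl xs") (auto simp: bpath_def)

lemma adj01: "bpath T xs \<Longrightarrow> 2 \<le> length xs \<Longrightarrow> badj T (hd xs) (xs ! 1)"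
proof -
  assume a: "bpath T xs" "2 \<le> length xs"
  then obtain x y r where "xs = x # y # r" by (cases xs; cases "tl xs") auto
  then show ?thesis using a unfolding bpath_alt by simp
qed

lemma branch_iff:
  assumes nc: "\<not> bhas_cycle T" and p: "bpath T xs" "hd xs = Inr v" "last xs = Inl e2"
  shows "e2 \<in> branch T v (e1, v) \<longleftrightarrow> xs ! 1 = Inl e1"
proof
  assume "e2 \<in> branch T v (e1, v)"
  then obtain ys where "bpath T ys" "hd ys = Inr v" "last ys = Inl e2" "ys ! 1 = Inl e1"
    unfolding branch_def by auto
  with path_unique[OF nc p(1) this(1)] p show "xs ! 1 = Inl e1" by simp
next
  assume "xs ! 1 = Inl e1"
  moreover have "2 \<le> length xs" using len2[OF p(1)] p by simp
  ultimately show "e2 \<in> branch T v (e1, v)" unfolding branch_def using p by auto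
qed

lemma ex_path: "bconnected T \<Longrightarrow> \<exists>xs. bpath T xs \<and> hd xs = x \<and> last xs = y"
  unfolding bconnected_def by blast

lemma partition_v:
  assumes nc: "\<not> bhas_cycle T" and con: "bconnected T"
  shows "(\<Union>\<epsilon>\<in>{\<epsilon>\<in>T. snd \<epsilon> = v}. branch T (snd \<epsilon>) \<epsilon>) = UNIV"
    and "\<forall>\<epsilon>1\<in>{\<epsilon>\<in>T. snd \<epsilon> = v}. \<forall>\<epsilon>2\<in>{\<epsilon>\<in>T. snd \<epsilon> = v}. \<epsilon>1 \<noteq> \<epsilon>2 \<longrightarrow>
            branch T (snd \<epsilon>1) \<epsilon>1 \<inter> branch T (snd \<epsilon>2) \<epsilon>2 = {}"
proof -
  show "(\<Union>\<epsilon>\<in>{\<epsilon>\<in>T. snd \<epsilon> = v}. branch T (snd \<epsilon>) \<epsilon>) = UNIV"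
  proof (intro set_eqI iffI)
    fix e2 :: 'a
    obtain xs where p: "bpath T xs" "hd xs = Inr v" "last xs = Inl e2" using ex_path[OF con] by blast
    have l: "2 \<le> length xs" using len2[OF p(1)] p by simp
    have "badj T (Inr v) (xs ! 1)" using adj01[OF p(1) l] p(2) by simp
    from badj_Inr_cases[OF this] obtain e1 where e1: "xs ! 1 = Inl e1" "(e1, v) \<in> T"
      by blast
    then have "e2 \<in> branch T v (e1, v)" using branch_iff[OF nc p] by simp
    then show "e2 \<in> (\<Union>\<epsilon>\<in>{\<epsilon>\<in>T. snd \<epsilon> = v}. branch T (snd \<epsilon>) \<epsilon>)" using e1 by (intro UN_I[of "(e1,v)"]) auto
  qed simp
  show "\<forall>\<epsilon>1\<in>{\<epsilon>\<in>T. snd \<epsilon> = v}. \<forall>\<epsilon>2\<in>{\<epsilon>\<in>T. snd \<epsilon> = v}. \<epsilon>1 \<noteq> \<epsilon>2 \<longrightarrow>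
            branch T (snd \<epsilon>1) \<epsilon>1 \<inter> branch T (snd \<epsilon>2) \<epsilon>2 = {}"
  proof (intro ballI impI)
    fix \<epsilon>1 \<epsilon>2 assume a: "\<epsilon>1 \<in> {\<epsilon>\<in>T. snd \<epsilon> = v}" "\<epsilon>2 \<in> {\<epsilon>\<in>T. snd \<epsilon> = v}" "\<epsilon>1 \<noteq> \<epsilon>2"
    obtain a1 a2 where eq: "\<epsilon>1 = (a1, v)" "\<epsilon>2 = (a2, v)" "a1 \<noteq> a2" using a
      by (cases \<epsilon>1, cases \<epsilon>2) auto
    show "branch T (snd \<epsilon>1) \<epsilon>1 \<inter> branch T (snd \<epsilon>2) \<epsilon>2 = {}"
    proof (rule ccontr)
      assume "branch T (snd \<epsilon>1) \<epsilon>1 \<inter> branch T (snd \<epsilon>2) \<epsilon>2 \<noteq> {}"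
      then obtain e2 where "e2 \<in> branch T v (a1, v)" "e2 \<in> branch T v (a2, v)" using eq by auto
      moreover obtain xs where p: "bpath T xs" "hd xs = Inr v" "last xs = Inl e2"
        using ex_path[OF con] by blast
      ultimately show False using branch_iff[OF nc p] eq by simp
    qed
  qed
qed

lemma card_sum_v:
  fixes T :: "('e::finite \<times> 'v::finite) set"
  assumes nc: "\<not> bhas_cycle T" and con: "bconnected T"
  shows "(\<Sum>\<epsilon>\<in>{\<epsilon>\<in>T. snd \<epsilon> = v}. card (branch T (snd \<epsilon>) \<epsilon>)) = CARD('e)"
proof -
  have "card (\<Union>\<epsilon>\<in>{\<epsilon>\<in>T. snd \<epsilon> = v}. branch T (snd \<epsilon>) \<epsilon>) = (\<Sum>\<epsilon>\<in>{\<epsilon>\<in>T. snd \<epsilon> = v}. card (branch T (snd \<epsilon>) \<epsilon>))"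
    by (rule card_UN_disjoint) (use partition_v(2)[OF nc con] in \<open>simp_all\<close>)
  then show ?thesis using partition_v(1)[OF nc con] by simp
qed

lemma bpath_prefix: "bpath T (c @ d) \<Longrightarrow> c \<noteq> [] \<Longrightarrow> bpath T c"
  unfolding bpath_alt successively_append_iff by auto

lemma own_branch: "(e, v) \<in> T \<Longrightarrow> e \<in> branch T v (e, v)"
  unfolding branch_def
  by (rule CollectI, rule exI[of _ "[Inr v, Inl e]"]) (simp add: bpath_alt)

lemma other_branch:
  assumes nc: "\<not> bhas_cycle T" and con: "bconnected T" and ne: "e2 \<noteq> e"
  shows "\<exists>v0\<in>{v. (e, v) \<in> T}. {v\<in>{v. (e, v) \<in> T}. e2 \<in> branch T v (e, v)} = {v. (e, v) \<in> T} - {v0}"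
proof -
  obtain p where p: "bpath T p" "hd p = Inl e" "last p = Inl e2" using ex_path[OF con] by blast
  have l: "2 \<le> length p" using len2[OF p(1)] p ne by simp
  have "badj T (Inl e) (p ! 1)" using adj01[OF p(1) l] p(2) by simp
  from badj_Inl_cases[OF this] obtain v0 where v0: "p ! 1 = Inr v0" "(e, v0) \<in> T" by blast
  obtain x y r where pr: "p = x # y # r" using l by (cases p; cases "tl p") auto
  have pr2: "p = Inl e # Inr v0 # r" using pr p(2) v0(1) by simp
  have rne: "r \<noteq> []" using p(3) pr2 by auto
  have dp: "distinct (Inl e # Inr v0 # r)" using p(1) pr2 by (simp add: bpath_def)
  have q0: "bpath T (Inr v0 # r)" using p(1) pr2 by (auto simp: bpath_alt)
  have notv0: "e2 \<notin> branch T v0 (e, v0)"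
  proof -
    have "last (Inr v0 # r) = Inl e2" using p(3) pr2 rne by simp
    from branch_iff[OF nc q0 _ this] have "e2 \<in> branch T v0 (e, v0) \<longleftrightarrow> hd r = Inl e"
      using rne by (cases r) auto
    moreover have "hd r \<noteq> Inl e" using dp rne by (cases r) auto
    ultimately show ?thesis by simp
  qed
  have others: "e2 \<in> branch T v (e, v)" if v: "(e, v) \<in> T" "v \<noteq> v0" for v
  proof -
    have nin: "Inr v \<notin> set p"
    proof
      assume "Inr v \<in> set p"
      then have "Inr v \<in> set r" using pr2 v(2) by auto
      then obtain r1 r2 where r: "r = r1 @ Inr v # r2" by (meson split_list)
      define c where "c = Inl e # Inr v0 # r1 @ [Inr v]"
      have "p = c @ r2" using pr2 r by (simp add: c_def)
      then have "bpath T c" using bpath_prefix[of T c r2] p(1) by (simp add: c_def)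
      moreover have "3 \<le> length c" by (simp add: c_def)
      moreover have "badj T (last c) (hd c)" using v by (simp add: c_def)
      ultimately have "bhas_cycle T" unfolding bhas_cycle_def by blast
      then show False using nc by simp
    qed
    have q: "bpath T (Inr v # p)" using p(1) nin v(1) pr2 by (auto simp: bpath_alt)
    have "last (Inr v # p) = Inl e2" using p(3) pr2 by simp
    from branch_iff[OF nc q _ this] show ?thesis using pr2 by simp
  qed
  have "{v\<in>{v. (e, v) \<in> T}. e2 \<in> branch T v (e, v)} = {v. (e, v) \<in> T} - {v0}"
    using notv0 others by auto
  then show ?thesis using v0(2) by blast
qed

lemma nonempty_nbr:
  assumes con: "bconnected T"
  shows "{v. (e, v) \<in> T} \<noteq> {}"
proof -
  obtain p where p: "bpath T p" "hd p = Inl e" "last p = Inr (undefined::'b)" using ex_path[OF con] by blast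
  have l: "2 \<le> length p" using len2[OF p(1)] p by simp
  have "badj T (Inl e) (p ! 1)" using adj01[OF p(1) l] p(2) by simp
  from badj_Inl_cases[OF this] show ?thesis by blast
qed

lemma count_sum:
  fixes T :: "('e::finite \<times> 'v::finite) set"
  assumes nc: "\<not> bhas_cycle T" and con: "bconnected T"
  shows "(\<Sum>v\<in>{v. (e, v) \<in> T}. card (branch T v (e, v))) = CARD('e) * (card {v. (e, v) \<in> T} - 1) + 1"
proof -
  define N where "N = {v. (e, v) \<in> T}"
  define d where "d = card N"
  have fN: "finite N" by simp
  have dpos: "d \<ge> 1" using nonempty_nbr[OF con, of e] fN unfolding d_def N_def
    by (simp add: Suc_le_eq card_gt_0_iff)
  have c: "card (branch T v (e, v)) = (\<Sum>x\<in>UNIV. if x \<in> branch T v (e, v) then 1 else 0)" for v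
    using sum.inter_filter[of "UNIV::'e set" "\<lambda>_. 1::nat" "\<lambda>x. x \<in> branch T v (e, v)"] by simp
  have c2: "card {v\<in>N. x \<in> branch T v (e, v)} = (\<Sum>v\<in>N. if x \<in> branch T v (e, v) then 1 else 0)" for x
    using sum.inter_filter[of N "\<lambda>_. 1::nat" "\<lambda>v. x \<in> branch T v (e, v)"] by simp
  have "(\<Sum>v\<in>N. card (branch T v (e, v))) = (\<Sum>x\<in>UNIV. card {v\<in>N. x \<in> branch T v (e, v)})"
    unfolding c c2 by (rule sum.swap)
  also have "\<dots> = card {v\<in>N. e \<in> branch T v (e, v)} + (\<Sum>x\<in>UNIV - {e}. card {v\<in>N. x \<in> branch T v (e, v)})"
    by (simp add: sum.remove)
  also have "card {v\<in>N. e \<in> branch T v (e, v)} = d"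
    unfolding d_def N_def using own_branch[of e _ T] by (metis (no_types, lifting) Collect_cong mem_Collect_eq)
  also have "(\<Sum>x\<in>UNIV - {e}. card {v\<in>N. x \<in> branch T v (e, v)}) = (\<Sum>x\<in>UNIV - {e}. d - 1)"
  proof (rule sum.cong)
    fix x assume "x \<in> UNIV - {e}"
    then have "x \<noteq> e" by simp
    from other_branch[OF nc con this] obtain v0 where "v0 \<in> N" "{v\<in>N. x \<in> branch T v (e, v)} = N - {v0}"
      unfolding N_def by blast
    then show "card {v\<in>N. x \<in> branch T v (e, v)} = d - 1" by (simp add: d_def)
  qed simp
  also have "\<dots> = (CARD('e) - 1) * (d - 1)" by (simp add: card_Diff_singleton)
  finally have "(\<Sum>v\<in>N. card (branch T v (e, v))) = d + (CARD('e) - 1) * (d - 1)" .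
  moreover have "CARD('e) \<ge> 1" by (simp add: Suc_le_eq)
  ultimately have "(\<Sum>v\<in>N. card (branch T v (e, v))) = CARD('e) * (d - 1) + 1"
    using dpos by (metis (no_types, lifting) Suc_diff_le add.commute add_Suc_right diff_Suc_1 le_add_diff_inverse mult.commute mult_Suc_right ordered_cancel_comm_monoid_diff_class.add_diff_inverse plus_1_eq_Suc)
  then show ?thesis unfolding N_def d_def .
qed

theorem lemma3p13:
  fixes G T :: "('e::finite \<times> 'v::finite) set"
  assumes "bconnected G"
    and "spanning_tree G T"
  shows "(\<forall>v. (\<forall>\<epsilon>\<in>{\<epsilon>\<in>T. snd \<epsilon> = v}. 0 \<le> weight T \<epsilon>) \<and>
              (\<Sum>\<epsilon>\<in>{\<epsilon>\<in>T. snd \<epsilon> = v}. weight T \<epsilon>) = 1 \<and>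
              (\<Sum>\<epsilon>\<in>{\<epsilon>\<in>T. snd \<epsilon> = v}. weight T \<epsilon> *\<^sub>R axis (fst \<epsilon>) 1) \<in> Delta T v)
     \<and> (\<Sum>v\<in>UNIV. \<Sum>\<epsilon>\<in>{\<epsilon>\<in>T. snd \<epsilon> = v}. weight T \<epsilon> *\<^sub>R (axis (fst \<epsilon>) 1 :: real ^ 'e))
          \<in> Mcell T
     \<and> (\<Sum>v\<in>UNIV. \<Sum>\<epsilon>\<in>{\<epsilon>\<in>T. snd \<epsilon> = v}. weight T \<epsilon> *\<^sub>R (axis (fst \<epsilon>) 1 :: real ^ 'e))
          = (\<chi> e. real (hypertree_of T e) + 1 / real CARD('e))"
proof -
  have nc: "\<not> bhas_cycle T" and con: "bconnected T" using assms(2) unfolding spanning_tree_def by auto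
  have Cpos: "real CARD('e) > 0" by simp
  have part1: "(\<forall>\<epsilon>\<in>{\<epsilon>\<in>T. snd \<epsilon> = v}. 0 \<le> weight T \<epsilon>) \<and>
              (\<Sum>\<epsilon>\<in>{\<epsilon>\<in>T. snd \<epsilon> = v}. weight T \<epsilon>) = 1 \<and>
              (\<Sum>\<epsilon>\<in>{\<epsilon>\<in>T. snd \<epsilon> = v}. weight T \<epsilon> *\<^sub>R axis (fst \<epsilon>) 1) \<in> Delta T v" for v
  proof (intro conjI)
    show nn: "\<forall>\<epsilon>\<in>{\<epsilon>\<in>T. snd \<epsilon> = v}. 0 \<le> weight T \<epsilon>" by (simp add: weight_def)
    have "(\<Sum>\<epsilon>\<in>{\<epsilon>\<in>T. snd \<epsilon> = v}. weight T \<epsilon>)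
        = real (\<Sum>\<epsilon>\<in>{\<epsilon>\<in>T. snd \<epsilon> = v}. card (branch T (snd \<epsilon>) \<epsilon>)) / real CARD('e)"
      unfolding weight_def by (simp add: sum_divide_distrib)
    also have "\<dots> = 1" using card_sum_v[OF nc con, of v] Cpos by simp
    finally show s1: "(\<Sum>\<epsilon>\<in>{\<epsilon>\<in>T. snd \<epsilon> = v}. weight T \<epsilon>) = 1" .
    show "(\<Sum>\<epsilon>\<in>{\<epsilon>\<in>T. snd \<epsilon> = v}. weight T \<epsilon> *\<^sub>R axis (fst \<epsilon>) 1) \<in> Delta T v"
      unfolding Delta_def
    proof (rule convex_sum)
      show "sum (weight T) {\<epsilon>\<in>T. snd \<epsilon> = v} = 1" using s1 .
      show "\<And>i. i \<in> {\<epsilon>\<in>T. snd \<epsilon> = v} \<Longrightarrow> 0 \<le> weight T i" using nn by blast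
      show "convex (convex hull {axis e 1 | e. (e, v) \<in> T})" by simp
      show "finite {\<epsilon>\<in>T. snd \<epsilon> = v}" by simp
      show "\<And>i. i \<in> {\<epsilon>\<in>T. snd \<epsilon> = v} \<Longrightarrow> axis (fst i) 1 \<in> convex hull {axis e 1 | e. (e, v) \<in> T}"
        by (rule hull_inc) force
    qed
  qed
  have part2: "(\<Sum>v\<in>UNIV. \<Sum>\<epsilon>\<in>{\<epsilon>\<in>T. snd \<epsilon> = v}. weight T \<epsilon> *\<^sub>R (axis (fst \<epsilon>) 1 :: real ^ 'e))
          \<in> Mcell T"
    unfolding Mcell_def using part1 by blast
  have part3: "(\<Sum>v\<in>UNIV. \<Sum>\<epsilon>\<in>{\<epsilon>\<in>T. snd \<epsilon> = v}. weight T \<epsilon> *\<^sub>R (axis (fst \<epsilon>) 1 :: real ^ 'e))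
          = (\<chi> e. real (hypertree_of T e) + 1 / real CARD('e))"
  proof -
    have g: "(\<Sum>v\<in>UNIV. \<Sum>\<epsilon>\<in>{\<epsilon>\<in>T. snd \<epsilon> = v}. weight T \<epsilon> *\<^sub>R (axis (fst \<epsilon>) 1 :: real ^ 'e))
       = (\<Sum>\<epsilon>\<in>T. weight T \<epsilon> *\<^sub>R (axis (fst \<epsilon>) 1 :: real ^ 'e))"
      using sum.group[of T UNIV snd "\<lambda>\<epsilon>. weight T \<epsilon> *\<^sub>R (axis (fst \<epsilon>) 1 :: real ^ 'e)"] by simp
    show ?thesis unfolding g
    proof (rule vec_eq_iff[THEN iffD2], rule allI)
      fix e :: 'e
      define N where "N = {v. (e, v) \<in> T}"
      have "(\<Sum>\<epsilon>\<in>T. weight T \<epsilon> *\<^sub>R (axis (fst \<epsilon>) 1 :: real ^ 'e)) $ e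
          = (\<Sum>\<epsilon>\<in>T. if fst \<epsilon> = e then weight T \<epsilon> else 0)"
        unfolding sum_component by (intro sum.cong) (auto simp: axis_def)
      also have "\<dots> = (\<Sum>\<epsilon>\<in>{\<epsilon>\<in>T. fst \<epsilon> = e}. weight T \<epsilon>)"
        by (simp add: sum.inter_filter)
      also have "{\<epsilon>\<in>T. fst \<epsilon> = e} = (\<lambda>v. (e, v)) ` N" unfolding N_def by force
      also have "(\<Sum>\<epsilon>\<in>(\<lambda>v. (e, v)) ` N. weight T \<epsilon>) = (\<Sum>v\<in>N. weight T (e, v))"
        by (subst sum.reindex) (auto simp: inj_on_def)
      also have "\<dots> = real (\<Sum>v\<in>N. card (branch T v (e, v))) / real CARD('e)"
        unfolding weight_def by (simp add: sum_divide_distrib)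
      also have "\<dots> = real (CARD('e) * (card N - 1) + 1) / real CARD('e)"
        using count_sum[OF nc con, of e] unfolding N_def by simp
      also have "\<dots> = real (card N - 1) + 1 / real CARD('e)"
        using Cpos by (simp add: field_simps)
      also have "\<dots> = (\<chi> e. real (hypertree_of T e) + 1 / real CARD('e)) $ e"
        by (simp add: hypertree_of_def N_def)
      finally show "(\<Sum>\<epsilon>\<in>T. weight T \<epsilon> *\<^sub>R (axis (fst \<epsilon>) 1 :: real ^ 'e)) $ e
          = (\<chi> e. real (hypertree_of T e) + 1 / real CARD('e)) $ e" .
    qed
  qed
  show ?thesis using part1 part2 part3 by blast
qed

end
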